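(* Let $\Phi=(A;\{E_i\}_{i=0}^d;A^*;\{E^*_i\}_{i=0}^d)$ be a tridiagonal system on $V$ with $d\ge1$, such that $(A,A^* )$ satisfies the $q$-Serre relations, with $E_iV$ the eigenspace of $A$ for $\theta_i=q^{2i-d}$ and $E^*_iV$ the eigenspace of $A^*$ for $\theta^*_i=q^{d-2i}$. Let $\{U_i\}_{i=0}^d$ be its split decomposition, $K:V\to V$ the linear map acting on $U_i$ as $q^{d-2i}I$, $t$ a scalar, and $B^*=tA^*+(1-t)K$. Then $B^*$ is diagonalizable with eigenvalues $\theta^*_0,\dots,\theta^*_d$, and for $0\le i\le d$ the $\theta^*_i$-eigenspace of $B^*$ has dimension $\dim U_i$.
   Context: $\mathcal K$ is an algebraically closed field; $V$ is a nonzero finite-dimensional vector space over $\mathcal K$; $q\in\mathcal K$ is nonzero and not a root of unity; $[3]_q=q^2+1+q^{-2}$. The $q$-Serre relations for $(X,Y)$: $X^3Y-[3]_qX^2YX+[3]_qXYX^2-YX^3=0$ and $Y^3X-[3]_qY^2XY+[3]_qYXY^2-XY^3=0$. Primitive idempotent of a diagonalizable $X$ for eigenvalue $\lambda_i$: $\prod_{j\ne i}\frac{X-\lambda_jI}{\lambda_i-\lambda_j}$. A tridiagonal system on $V$ is a sequence $(A;\{E_i\}_{i=0}^d;A^*;\{E^*_i\}_{i=0}^d)$ with $A,A^*$ diagonalizable, $\{E_i\}$, $\{E^*_i\}$ orderings of their primitive idempotents, $E_iA^*E_j=0$ and $E^*_iAE^*_j=0$ when $|i-j|>1$, and no subspaces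 other than $0,V$ invariant under both $A$ and $A^*$. Split decomposition: $U_i=(E^*_0V+\cdots+E^*_iV)\cap(E_iV+\cdots+E_dV)$; known: $V=U_0\oplus\cdots\oplus U_d$ with each $U_i\ne0$, $(A-\theta_iI)U_i\subseteq U_{i+1}$, $(A^*-\theta^*_iI)U_i\subseteq U_{i-1}$ ($U_{-1}=U_{d+1}=0$). *)

theory Defs
  imports "HOL-Computational_Algebra.Polynomial"
begin

text \<open>The vector space V is modelled as the whole carrier type 'v, with scalar
multiplication s over the field 'a (HOL's vector_space locale).\<close>

definition eigenvalues_of :: "('a::field \<Rightarrow> 'v::ab_group_add \<Rightarrow> 'v) \<Rightarrow> ('v \<Rightarrow> 'v) \<Rightarrow> 'a set" where
  "eigenvalues_of s X = {c. \<exists>v. v \<noteq> 0 \<and> X v = s c v}"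

definition eigenspace_of :: "('a::field \<Rightarrow> 'v::ab_group_add \<Rightarrow> 'v) \<Rightarrow> ('v \<Rightarrow> 'v) \<Rightarrow> 'a \<Rightarrow> 'v set" where
  "eigenspace_of s X c = {v. X v = s c v}"

definition diagonalizable_op :: "('a::field \<Rightarrow> 'v::ab_group_add \<Rightarrow> 'v) \<Rightarrow> ('v \<Rightarrow> 'v) \<Rightarrow> bool" where
  "diagonalizable_op s X \<longleftrightarrow>
     Vector_Spaces.linear s s X \<and> module.span s {v. \<exists>c. X v = s c v} = UNIV"

definition prim_idem ::
  "('a::field \<Rightarrow> 'v::ab_group_add \<Rightarrow> 'v) \<Rightarrow> ('v \<Rightarrow> 'v) \<Rightarrow> (nat \<Rightarrow> 'a) \<Rightarrow> nat \<Rightarrow> nat \<Rightarrow> ('v \<Rightarrow> 'v)" where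
  "prim_idem s X th d i =
     foldr (\<lambda>j F. (\<lambda>v. s (inverse (th i - th j)) (X v - s (th j) v)) \<circ> F)
           (filter (\<lambda>j. j \<noteq> i) [0..<Suc d]) id"

definition tridiagonal_system ::
  "('a::field \<Rightarrow> 'v::ab_group_add \<Rightarrow> 'v) \<Rightarrow> nat \<Rightarrow> ('v \<Rightarrow> 'v) \<Rightarrow> (nat \<Rightarrow> 'v \<Rightarrow> 'v) \<Rightarrow> (nat \<Rightarrow> 'a)
    \<Rightarrow> ('v \<Rightarrow> 'v) \<Rightarrow> (nat \<Rightarrow> 'v \<Rightarrow> 'v) \<Rightarrow> (nat \<Rightarrow> 'a) \<Rightarrow> bool" where
  "tridiagonal_system s d A E th As Es ths \<longleftrightarrow>
     diagonalizable_op s A \<and> diagonalizable_op s As \<and>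
     inj_on th {0..d} \<and> eigenvalues_of s A = th ` {0..d} \<and>
     inj_on ths {0..d} \<and> eigenvalues_of s As = ths ` {0..d} \<and>
     (\<forall>i\<le>d. E i = prim_idem s A th d i) \<and>
     (\<forall>i\<le>d. Es i = prim_idem s As ths d i) \<and>
     (\<forall>i\<le>d. \<forall>j\<le>d. (i > j + 1 \<or> j > i + 1) \<longrightarrow>
        E i \<circ> As \<circ> E j = (\<lambda>v. 0) \<and> Es i \<circ> A \<circ> Es j = (\<lambda>v. 0)) \<and>
     (\<forall>W. module.subspace s W \<and> A ` W \<subseteq> W \<and> As ` W \<subseteq> W \<longrightarrow> W = {0} \<or> W = UNIV)"

definition q_serre :: "('a::field \<Rightarrow> 'v::ab_group_add \<Rightarrow> 'v) \<Rightarrow> 'a \<Rightarrow> ('v \<Rightarrow> 'v) \<Rightarrow> ('v \<Rightarrow> 'v) \<Rightarrow> bool" where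
  "q_serre s q X Y \<longleftrightarrow>
     (let c = q powi 2 + 1 + q powi (-2) in
      (\<forall>v. X (X (X (Y v))) - s c (X (X (Y (X v)))) + s c (X (Y (X (X v)))) - Y (X (X (X v))) = 0) \<and>
      (\<forall>v. Y (Y (Y (X v))) - s c (Y (Y (X (Y v)))) + s c (Y (X (Y (Y v)))) - X (Y (Y (Y v))) = 0))"

definition split_component ::
  "('a::field \<Rightarrow> 'v::ab_group_add \<Rightarrow> 'v) \<Rightarrow> nat \<Rightarrow> (nat \<Rightarrow> 'v \<Rightarrow> 'v) \<Rightarrow> (nat \<Rightarrow> 'v \<Rightarrow> 'v) \<Rightarrow> nat \<Rightarrow> 'v set" where
  "split_component s d E Es i =
     module.span s (\<Union>h\<in>{0..i}. range (Es h)) \<inter> module.span s (\<Union>h\<in>{i..d}. range (E h))"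

end

theory Submission
  imports Defs
begin


context vector_space begin

lemma eig_subspace:
  assumes "Vector_Spaces.linear scale scale X"
  shows "subspace (eigenspace_of scale X c)"
proof -
  interpret f: Vector_Spaces.linear scale scale X by fact
  show ?thesis unfolding subspace_def eigenspace_of_def
    by (auto simp: f.add f.scale f.zero scale_right_distrib)
qed

lemma lin_span_sub:
  assumes "Vector_Spaces.linear scale scale X" "\<And>x. x \<in> S \<Longrightarrow> X x \<in> T" "subspace T" "x \<in> span S"
  shows "X x \<in> T"
proof -
  interpret f: Vector_Spaces.linear scale scale X by fact
  have "X x \<in> X ` span S" using assms(4) by blast
  also have "\<dots> = span (X ` S)" by (simp add: f.span_image)
  also have "\<dots> \<subseteq> T" using assms(2,3) by (intro span_minimal) auto
  finally show ?thesis .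
qed

lemma eig_indep:
  assumes lin: "Vector_Spaces.linear scale scale X" and fin: "finite I"
  shows "x \<in> span (\<Union>j\<in>I. eigenspace_of scale X (f j)) \<Longrightarrow> X x = c *s x \<Longrightarrow> c \<notin> f ` I \<Longrightarrow> x = 0"
  using fin
proof (induction I arbitrary: x c rule: finite_induct)
  case empty
  then show ?case by simp
next
  case (insert k I)
  interpret L: Vector_Spaces.linear scale scale X by fact
  let ?E = "eigenspace_of scale X (f k)"
  let ?S = "span (\<Union>j\<in>I. eigenspace_of scale X (f j))"
  have "x \<in> span (?E \<union> (\<Union>j\<in>I. eigenspace_of scale X (f j)))"
    using insert.prems(1) by simp
  then obtain y z where yz: "x = y + z" "y \<in> span ?E" "z \<in> ?S"
    unfolding span_Un by blast
  have spanE: "span ?E = ?E" using eig_subspace[OF lin] by (rule span_eq_iff[THEN iffD2])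
  have "y \<in> ?E" using yz(2) spanE by blast
  then have Xy: "X y = f k *s y" by (simp add: eigenspace_of_def)
  have inv: "X z \<in> ?S"
    apply (rule lin_span_sub[OF lin _ _ yz(3)])
     apply (auto simp: eigenspace_of_def intro!: span_base)
    subgoal for u j apply (rule bexI[of _ j]) by (auto simp: L.scale)
    done
  define w where "w = X z - f k *s z"
  have w_in: "w \<in> ?S" unfolding w_def using inv yz(3) by (intro span_diff span_scale)
  have w_eq: "w = (c - f k) *s x"
  proof -
    have "X x = X y + X z" using yz(1) L.add by simp
    then have "X z = c *s x - f k *s y" using insert.prems(2) Xy by simp
    then show ?thesis unfolding w_def using yz(1)
      by (simp add: scale_left_diff_distrib scale_right_distrib algebra_simps)
  qed
  have "X w = c *s w" unfolding w_eq using insert.prems(2) by (simp add: L.scale)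
  then have "w = 0" using insert.IH[OF w_in] insert.prems(3) by auto
  moreover have "c \<noteq> f k" using insert.prems(3) by auto
  ultimately show ?case using w_eq by simp
qed

end

context finite_dimensional_vector_space begin

lemma eig_dim:
  assumes lin: "Vector_Spaces.linear scale scale X" and fin: "finite I" and inj: "inj_on f I"
  shows "dim (span (\<Union>j\<in>I. eigenspace_of scale X (f j))) = (\<Sum>j\<in>I. dim (eigenspace_of scale X (f j)))"
  using fin inj
proof (induction I rule: finite_induct)
  case empty
  then show ?case by simp
next
  case (insert k I)
  let ?E = "eigenspace_of scale X (f k)"
  let ?S = "span (\<Union>j\<in>I. eigenspace_of scale X (f j))"
  have sE: "subspace ?E" by (rule eig_subspace[OF lin])
  have "span (\<Union>j\<in>insert k I. eigenspace_of scale X (f j)) = {x + y |x y. x \<in> ?E \<and> y \<in> ?S}"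
  proof -
    have "span ?E = ?E" using sE by (rule span_eq_iff[THEN iffD2])
    then show ?thesis using span_Un[of ?E "\<Union>j\<in>I. eigenspace_of scale X (f j)"] by (simp del: span_eq_iff)
  qed
  moreover have "?E \<inter> ?S = {0}"
  proof -
    have "x = 0" if "x \<in> ?E" "x \<in> ?S" for x
      using eig_indep[OF lin insert.hyps(1) that(2), of "f k"] that(1) insert.prems insert.hyps(2)
      by (auto simp: eigenspace_of_def)
    then show ?thesis using sE subspace_0 span_zero by blast
  qed
  ultimately have "dim (span (\<Union>j\<in>insert k I. eigenspace_of scale X (f j))) = dim ?E + dim ?S"
    using dim_sums_Int[OF sE subspace_span[of "\<Union>j\<in>I. eigenspace_of scale X (f j)"]] by simp
  then show ?case using insert by simp
qed

end

context vector_space begin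

lemma lin_eq_on:
  assumes lf: "Vector_Spaces.linear scale scale f" and lg: "Vector_Spaces.linear scale scale g"
    and x: "x \<in> span B" and eq: "\<And>b. b \<in> B \<Longrightarrow> f b = g b"
  shows "f x = g x"
proof -
  interpret f: Vector_Spaces.linear scale scale f by fact
  interpret g: Vector_Spaces.linear scale scale g by fact
  have "subspace {x. f x = g x}" unfolding subspace_def
    by (simp add: f.add g.add f.scale g.scale f.zero g.zero)
  then show ?thesis using span_induct[OF x, of "\<lambda>x. f x = g x"] eq by simp
qed

lemma foldr_lin:
  assumes lin: "Vector_Spaces.linear scale scale X"
    and hdef: "\<And>j F. h j F = (\<lambda>v. inverse (a j) *s (X v - b j *s v)) \<circ> F"
  shows "Vector_Spaces.linear scale scale (foldr h L id)"
proof (induction L)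
  case Nil
  then show ?case by (simp add: linear_ident)
next
  case (Cons j L)
  interpret L: Vector_Spaces.linear scale scale X by fact
  have g: "Vector_Spaces.linear scale scale (\<lambda>v. inverse (a j) *s (X v - b j *s v))"
  proof -
    have ad: "inverse (a j) *s (X (x + y) - b j *s (x + y)) =
      inverse (a j) *s (X x - b j *s x) + inverse (a j) *s (X y - b j *s y)" for x y
    proof -
      have e: "X (x + y) - b j *s (x + y) = (X x - b j *s x) + (X y - b j *s y)"
        by (simp add: L.add scale_right_distrib algebra_simps)
      show ?thesis by (subst e) (rule scale_right_distrib)
    qed
    have sc: "inverse (a j) *s (X (c *s x) - b j *s (c *s x)) = c *s (inverse (a j) *s (X x - b j *s x))" for c x
    proof -
      have "X (c *s x) - b j *s (c *s x) = c *s (X x - b j *s x)"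
        by (simp add: L.scale scale_right_diff_distrib mult.commute)
      then show ?thesis by (simp add: mult.commute)
    qed
    show ?thesis unfolding Vector_Spaces.linear_iff using vector_space_axioms ad sc by blast
  qed
  have "foldr h (j # L) id = (\<lambda>v. inverse (a j) *s (X v - b j *s v)) \<circ> foldr h L id"
    by (simp only: foldr_Cons o_apply) (rule hdef)
  then show ?case by (simp only:) (rule Vector_Spaces.linear_compose[OF Cons g])
qed

lemma prim_idem_linear:
  assumes lin: "Vector_Spaces.linear scale scale X"
  shows "Vector_Spaces.linear scale scale (prim_idem scale X th d i)"
  unfolding prim_idem_def by (rule foldr_lin[OF lin]) (rule refl)

lemma foldr_eig:
  assumes lin: "Vector_Spaces.linear scale scale X" and ev: "X v = c *s v"
    and hdef: "\<And>j F. h j F = (\<lambda>v. inverse (a j) *s (X v - b j *s v)) \<circ> F"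
  shows "foldr h L id v
     = prod_list (map (\<lambda>j. inverse (a j) * (c - b j)) L) *s v"
proof (induction L)
  case Nil
  then show ?case by simp
next
  case (Cons j L)
  interpret L: Vector_Spaces.linear scale scale X by fact
  define p where "p = prod_list (map (\<lambda>j. inverse (a j) * (c - b j)) L)"
  have IH: "foldr h L id v = p *s v"
    using Cons.IH by (simp only: p_def)
  have st: "foldr h (j # L) id v
     = inverse (a j) *s (X (p *s v) - b j *s (p *s v))" using IH by (simp only: foldr_Cons o_apply hdef)
  have "X (p *s v) = (p * c) *s v" by (simp add: L.scale ev)
  then have "X (p *s v) - b j *s (p *s v) = (p * c - b j * p) *s v" by (simp add: scale_left_diff_distrib)
  then have "inverse (a j) *s (X (p *s v) - b j *s (p *s v)) = (inverse (a j) * (p * c - b j * p)) *s v"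
    by simp
  also have "inverse (a j) * (p * c - b j * p) = prod_list (map (\<lambda>j. inverse (a j) * (c - b j)) (j # L))"
    unfolding p_def by (simp add: algebra_simps)
  finally have fin: "inverse (a j) *s (X (p *s v) - b j *s (p *s v)) = prod_list (map (\<lambda>j. inverse (a j) * (c - b j)) (j # L)) *s v" .
  show ?case by (rule trans[OF st fin])
qed

lemma prim_idem_eig:
  assumes lin: "Vector_Spaces.linear scale scale X" and ev: "X v = c *s v"
  shows "prim_idem scale X th d i v = (\<Prod>j\<in>{0..d} - {i}. inverse (th i - th j) * (c - th j)) *s v"
proof -
  have "prim_idem scale X th d i v = prod_list (map (\<lambda>j. inverse (th i - th j) * (c - th j))
        (filter (\<lambda>j. j \<noteq> i) [0..<Suc d])) *s v"
    unfolding prim_idem_def by (rule foldr_eig[OF lin ev]) (rule refl)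
  also have "prod_list (map (\<lambda>j. inverse (th i - th j) * (c - th j))
        (filter (\<lambda>j. j \<noteq> i) [0..<Suc d])) = (\<Prod>j\<in>{0..d} - {i}. inverse (th i - th j) * (c - th j))"
  proof -
    have "set (filter (\<lambda>j. j \<noteq> i) [0..<Suc d]) = {0..d} - {i}" by auto
    moreover have "distinct (filter (\<lambda>j. j \<noteq> i) [0..<Suc d])" by simp
    ultimately show ?thesis using prod.distinct_set_conv_list[of "filter (\<lambda>j. j \<noteq> i) [0..<Suc d]" "\<lambda>j. inverse (th i - th j) * (c - th j)"] by simp
  qed
  finally show ?thesis .
qed

lemma prim_idem_delta:
  assumes lin: "Vector_Spaces.linear scale scale X" and inj: "inj_on th {0..d}"
    and i: "i \<le> d" and j: "j \<le> d" and ev: "X v = th j *s v"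
  shows "prim_idem scale X th d i v = (if i = j then v else 0)"
proof (cases "i = j")
  case True
  have "(\<Prod>k\<in>{0..d} - {i}. inverse (th i - th k) * (th j - th k)) = (\<Prod>k\<in>{0..d} - {i}. 1)"
  proof (rule prod.cong)
    fix k assume "k \<in> {0..d} - {i}"
    then have "th i \<noteq> th k" using inj i by (auto dest: inj_onD)
    then show "inverse (th i - th k) * (th j - th k) = 1" using True by simp
  qed simp
  then show ?thesis using prim_idem_eig[OF lin ev, of th d i] True by simp
next
  case False
  have "(\<Prod>k\<in>{0..d} - {i}. inverse (th i - th k) * (th j - th k)) = 0"
    using False j apply (intro prod_zero) apply simp apply (rule bexI[of _ j]) by auto
  then show ?thesis using prim_idem_eig[OF lin ev, of th d i] False by simp
qed

lemma diag_span:
  assumes diag: "diagonalizable_op scale X" and ev: "eigenvalues_of scale X = th ` {0..d}"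
  shows "span (\<Union>j\<in>{0..d}. eigenspace_of scale X (th j)) = UNIV"
proof -
  have "{v. \<exists>c. X v = c *s v} \<subseteq> span (\<Union>j\<in>{0..d}. eigenspace_of scale X (th j))"
  proof
    fix v assume "v \<in> {v. \<exists>c. X v = c *s v}"
    then obtain c where c: "X v = c *s v" by auto
    show "v \<in> span (\<Union>j\<in>{0..d}. eigenspace_of scale X (th j))"
    proof (cases "v = 0")
      case True then show ?thesis by (simp add: span_zero)
    next
      case False
      then have "c \<in> eigenvalues_of scale X" using c by (auto simp: eigenvalues_of_def)
      then obtain j where "j \<in> {0..d}" "c = th j" using ev by auto
      then show ?thesis using c by (intro span_base) (auto simp: eigenspace_of_def)
    qed
  qed
  then have "span {v. \<exists>c. X v = c *s v} \<subseteq> span (\<Union>j\<in>{0..d}. eigenspace_of scale X (th j))"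
    by (intro span_minimal) auto
  then show ?thesis using diag unfolding diagonalizable_op_def by auto
qed

lemma E_range:
  assumes diag: "diagonalizable_op scale X" and ev: "eigenvalues_of scale X = th ` {0..d}"
    and inj: "inj_on th {0..d}" and i: "i \<le> d"
  shows "prim_idem scale X th d i v \<in> eigenspace_of scale X (th i)"
proof -
  have lin: "Vector_Spaces.linear scale scale X" using diag by (simp add: diagonalizable_op_def)
  show ?thesis
  proof (rule lin_span_sub[OF prim_idem_linear[OF lin] _ eig_subspace[OF lin]])
    show "v \<in> span (\<Union>j\<in>{0..d}. eigenspace_of scale X (th j))" using diag_span[OF diag ev] by simp
    fix x assume "x \<in> (\<Union>j\<in>{0..d}. eigenspace_of scale X (th j))"
    then obtain j where j: "j \<le> d" "X x = th j *s x" by (auto simp: eigenspace_of_def)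
    show "prim_idem scale X th d i x \<in> eigenspace_of scale X (th i)"
      using prim_idem_delta[OF lin inj i j] j(2) subspace_0[OF eig_subspace[OF lin, of "th i"]]
      by (auto simp: eigenspace_of_def)
  qed
qed

lemma E_sum:
  assumes diag: "diagonalizable_op scale X" and ev: "eigenvalues_of scale X = th ` {0..d}"
    and inj: "inj_on th {0..d}"
  shows "(\<Sum>i\<in>{0..d}. prim_idem scale X th d i v) = v"
proof -
  have lin: "Vector_Spaces.linear scale scale X" using diag by (simp add: diagonalizable_op_def)
  have v: "v \<in> span (\<Union>j\<in>{0..d}. eigenspace_of scale X (th j))" using diag_span[OF diag ev] by simp
  have L: "Vector_Spaces.linear scale scale (prim_idem scale X th d i)" for i
    by (rule prim_idem_linear[OF lin])
  show ?thesis
  proof (induction rule: span_induct[OF v])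
    case 1
    have add: "prim_idem scale X th d i (x + y) = prim_idem scale X th d i x + prim_idem scale X th d i y" for i x y
      using L[of i] by (simp add: Vector_Spaces.linear_iff)
    have sc: "prim_idem scale X th d i (c *s x) = c *s prim_idem scale X th d i x" for i c x
      using L[of i] by (simp add: Vector_Spaces.linear_iff)
    have z: "prim_idem scale X th d i 0 = 0" for i
      using sc[of i 0 0] by simp
    show ?case unfolding subspace_def
      by (simp add: add sc z sum.distrib scale_sum_right[symmetric])
  next
    case (2 x)
    then obtain j where j: "j \<le> d" "X x = th j *s x" by (auto simp: eigenspace_of_def)
    have "(\<Sum>i\<in>{0..d}. prim_idem scale X th d i x) = (\<Sum>i\<in>{0..d}. if i = j then x else 0)"
      using prim_idem_delta[OF lin inj _ j] by (intro sum.cong) auto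
    then show ?case using j by simp
  qed
qed

end


lemma tds_swap: "tridiagonal_system s d A E th As Es ths \<Longrightarrow> tridiagonal_system s d As Es ths A E th"
  unfolding tridiagonal_system_def apply (simp only: conj_ac) apply (elim conjE) apply (intro conjI TrueI refl) by assumption+

locale tds = finite_dimensional_vector_space scale Basis
  for scale :: "'a::field \<Rightarrow> 'v::ab_group_add \<Rightarrow> 'v" (infixr \<open>*s\<close> 75) and Basis :: "'v set" +
  fixes d :: nat and A :: "'v \<Rightarrow> 'v" and E :: "nat \<Rightarrow> 'v \<Rightarrow> 'v" and th :: "nat \<Rightarrow> 'a"
    and As :: "'v \<Rightarrow> 'v" and Es :: "nat \<Rightarrow> 'v \<Rightarrow> 'v" and ths :: "nat \<Rightarrow> 'a"
  assumes TDS: "tridiagonal_system scale d A E th As Es ths"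
begin

lemma swap: "tds scale Basis d As Es ths A E th"
  by (rule tds.intro[OF finite_dimensional_vector_space_axioms]) (unfold_locales, rule tds_swap[OF TDS])

lemma diagA: "diagonalizable_op scale A" using TDS[unfolded tridiagonal_system_def, THEN conjunct1] .
lemma diagAs: "diagonalizable_op scale As" using TDS[unfolded tridiagonal_system_def, THEN conjunct2, THEN conjunct1] .
lemma injth: "inj_on th {0..d}" using TDS[unfolded tridiagonal_system_def, THEN conjunct2, THEN conjunct2, THEN conjunct1] .
lemma evA: "eigenvalues_of scale A = th ` {0..d}" using TDS[unfolded tridiagonal_system_def, THEN conjunct2, THEN conjunct2, THEN conjunct2, THEN conjunct1] .
lemma injths: "inj_on ths {0..d}" using TDS[unfolded tridiagonal_system_def, THEN conjunct2, THEN conjunct2, THEN conjunct2, THEN conjunct2, THEN conjunct1] .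
lemma evAs: "eigenvalues_of scale As = ths ` {0..d}" using TDS[unfolded tridiagonal_system_def, THEN conjunct2, THEN conjunct2, THEN conjunct2, THEN conjunct2, THEN conjunct2, THEN conjunct1] .
lemma Edef: "i \<le> d \<Longrightarrow> E i = prim_idem scale A th d i" using TDS[unfolded tridiagonal_system_def, THEN conjunct2, THEN conjunct2, THEN conjunct2, THEN conjunct2, THEN conjunct2, THEN conjunct2, THEN conjunct1] by blast
lemma Esdef: "i \<le> d \<Longrightarrow> Es i = prim_idem scale As ths d i" using TDS[unfolded tridiagonal_system_def, THEN conjunct2, THEN conjunct2, THEN conjunct2, THEN conjunct2, THEN conjunct2, THEN conjunct2, THEN conjunct2, THEN conjunct1] by blast
lemma tri0: "\<forall>i\<le>d. \<forall>j\<le>d. (i > j + 1 \<or> j > i + 1) \<longrightarrow>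
        E i \<circ> As \<circ> E j = (\<lambda>v. 0) \<and> Es i \<circ> A \<circ> Es j = (\<lambda>v. 0)" using TDS[unfolded tridiagonal_system_def, THEN conjunct2, THEN conjunct2, THEN conjunct2, THEN conjunct2, THEN conjunct2, THEN conjunct2, THEN conjunct2, THEN conjunct2, THEN conjunct1] .
lemma tri: "i \<le> d \<Longrightarrow> j \<le> d \<Longrightarrow> i > j + 1 \<or> j > i + 1 \<Longrightarrow> E i \<circ> As \<circ> E j = (\<lambda>v. 0)"
  using tri0 by blast
lemma tris: "i \<le> d \<Longrightarrow> j \<le> d \<Longrightarrow> i > j + 1 \<or> j > i + 1 \<Longrightarrow> Es i \<circ> A \<circ> Es j = (\<lambda>v. 0)"
  using tri0 by blast
lemma irr: "subspace W \<Longrightarrow> A ` W \<subseteq> W \<Longrightarrow> As ` W \<subseteq> W \<Longrightarrow> W = {0} \<or> W = UNIV"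
  using TDS[unfolded tridiagonal_system_def, THEN conjunct2, THEN conjunct2, THEN conjunct2, THEN conjunct2, THEN conjunct2, THEN conjunct2, THEN conjunct2, THEN conjunct2, THEN conjunct2] by blast

lemma linA: "Vector_Spaces.linear scale scale A" using diagA by (simp add: diagonalizable_op_def)
lemma linAs: "Vector_Spaces.linear scale scale As" using diagAs by (simp add: diagonalizable_op_def)

definition SP :: "(nat \<Rightarrow> 'v \<Rightarrow> 'v) \<Rightarrow> nat set \<Rightarrow> 'v set" where
  "SP X I = span (\<Union>h\<in>I. range (X h))"

lemma range_E: "i \<le> d \<Longrightarrow> range (E i) = eigenspace_of scale A (th i)"
proof
  assume i: "i \<le> d"
  show "range (E i) \<subseteq> eigenspace_of scale A (th i)"
    using E_range[OF diagA evA injth i] Edef[OF i] by auto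
  show "eigenspace_of scale A (th i) \<subseteq> range (E i)"
  proof
    fix v assume "v \<in> eigenspace_of scale A (th i)"
    then have "E i v = v" using prim_idem_delta[OF linA injth i i] Edef[OF i]
      by (simp add: eigenspace_of_def)
    then show "v \<in> range (E i)" by (metis rangeI)
  qed
qed

lemma E_sum: "(\<Sum>i\<in>{0..d}. E i v) = v"
  using E_sum[OF diagA evA injth, of v] Edef by simp

lemma SP_full: "SP E {0..d} = UNIV"
proof -
  have "v \<in> SP E {0..d}" for v
  proof -
    have "(\<Sum>i\<in>{0..d}. E i v) \<in> SP E {0..d}" unfolding SP_def
      apply (intro span_sum span_base)
      subgoal for x by (rule UN_I[of x]) auto
      done
    then show ?thesis using E_sum by simp
  qed
  then show ?thesis by auto
qed

lemma SP_subspace: "subspace (SP X I)" unfolding SP_def by simp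

lemma SP_mono: "I \<subseteq> J \<Longrightarrow> SP X I \<subseteq> SP X J"
  unfolding SP_def by (intro span_mono) auto

lemma SP_empty: "SP X {} = {0}" unfolding SP_def by simp

lemma A_gen:
  assumes j: "j \<le> d" and v: "v \<in> range (Es j)"
    and J: "\<And>k. k \<le> d \<Longrightarrow> k \<le> j + 1 \<Longrightarrow> j \<le> k + 1 \<Longrightarrow> k \<in> J"
  shows "A v \<in> SP Es J"
proof -
  interpret sw: tds scale Basis d As Es ths A E th by (rule swap)
  have "A v = (\<Sum>k\<in>{0..d}. Es k (A v))" using sw.E_sum by simp
  also have "\<dots> \<in> SP Es J" unfolding SP_def
  proof (rule span_sum)
    fix k assume k: "k \<in> {0..d}"
    show "Es k (A v) \<in> span (\<Union>h\<in>J. range (Es h))"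
    proof (cases "k \<le> j + 1 \<and> j \<le> k + 1")
      case True
      then show ?thesis using J k by (intro span_base) auto
    next
      case False
      obtain w where w: "v = Es j w" using v by auto
      have "Es k \<circ> A \<circ> Es j = (\<lambda>v. 0)" using tris[of k j] k j False by auto
      from fun_cong[OF this, of w] show ?thesis using w by (simp add: span_zero)
    qed
  qed
  finally show ?thesis .
qed

lemma G2: "i \<le> d \<Longrightarrow> x \<in> SP Es {0..i} \<Longrightarrow> A x \<in> SP Es {0..Suc i}"
  unfolding SP_def[of Es "{0..i}"]
  apply (erule lin_span_sub[OF linA _ SP_subspace, rotated])
  apply clarify
  subgoal for x h w by (rule A_gen[of h]) auto
  done

lemma G2': "i \<le> d \<Longrightarrow> x \<in> SP Es {i..d} \<Longrightarrow> A x \<in> SP Es {i - 1..d}"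
  unfolding SP_def[of Es "{i..d}"]
  apply (erule lin_span_sub[OF linA _ SP_subspace, rotated])
  apply clarify
  subgoal for x h w by (rule A_gen[of h]) auto
  done

lemma lin_shift: "Vector_Spaces.linear scale scale X \<Longrightarrow> Vector_Spaces.linear scale scale (\<lambda>x. X x - c *s x)"
proof -
  assume L: "Vector_Spaces.linear scale scale X"
  interpret L: Vector_Spaces.linear scale scale X by fact
  have ad: "X (x + y) - c *s (x + y) = (X x - c *s x) + (X y - c *s y)" for x y
    by (simp add: L.add scale_right_distrib algebra_simps)
  have sc: "X (a *s x) - c *s (a *s x) = a *s (X x - c *s x)" for a x
    by (simp add: L.scale scale_right_diff_distrib mult.commute)
  show ?thesis unfolding Vector_Spaces.linear_iff using vector_space_axioms ad sc by blast
qed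

lemma G3_gen:
  assumes i: "i \<le> d" and x: "x \<in> SP E I" and I: "I \<subseteq> {0..d}"
  shows "A x - th i *s x \<in> SP E (I - {i})"
  using x unfolding SP_def[of E I]
proof (rule lin_span_sub[OF lin_shift[OF linA] _ SP_subspace, rotated])
  fix v assume "v \<in> (\<Union>h\<in>I. range (E h))"
  then obtain h where h: "h \<in> I" "v \<in> range (E h)" by auto
  then have hd: "h \<le> d" using I by auto
  have "A v = th h *s v" using h(2) range_E[OF hd] by (simp add: eigenspace_of_def)
  then have eq: "A v - th i *s v = (th h - th i) *s v" by (simp add: scale_left_diff_distrib)
  show "A v - th i *s v \<in> SP E (I - {i})"
  proof (cases "h = i")
    case True then show ?thesis using eq by (simp add: SP_def span_zero)
  next
    case False then show ?thesis unfolding eq SP_def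
      by (intro span_scale span_base) (use h in auto)
  qed
qed

lemma G3: "i \<le> d \<Longrightarrow> x \<in> SP E {i..d} \<Longrightarrow> A x - th i *s x \<in> SP E {Suc i..d}"
proof -
  assume "i \<le> d" "x \<in> SP E {i..d}"
  moreover have "{i..d} - {i} = {Suc i..d}" by auto
  ultimately show ?thesis using G3_gen[of i x "{i..d}"] by simp
qed

lemma G3': "i \<le> d \<Longrightarrow> x \<in> SP E {0..i} \<Longrightarrow> A x - th i *s x \<in> SP E {0..<i}"
proof -
  assume "i \<le> d" "x \<in> SP E {0..i}"
  moreover have "{0..i} - {i} = {0..<i}" by auto
  ultimately show ?thesis using G3_gen[of i x "{0..i}"] by simp
qed


definition U :: "nat \<Rightarrow> 'v set" where "U i = SP Es {0..i} \<inter> SP E {i..d}"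

lemma U_split: "U i = split_component scale d E Es i"
  by (simp add: U_def SP_def split_component_def)

lemma U_A:
  assumes i: "i \<le> d" and u: "u \<in> U i"
  shows "A u - th i *s u \<in> (if i = d then {0} else U (Suc i))"
proof -
  have w1: "A u - th i *s u \<in> SP E {Suc i..d}" using G3[OF i] u by (simp add: U_def)
  show ?thesis
  proof (cases "i = d")
    case True
    then show ?thesis using w1 SP_empty[of E] by simp
  next
    case False
    have "A u \<in> SP Es {0..Suc i}" using G2[OF i] u by (simp add: U_def)
    moreover have "th i *s u \<in> SP Es {0..Suc i}"
      using u SP_mono[of "{0..i}" "{0..Suc i}" Es] unfolding U_def
      by (intro subspace_scale[OF SP_subspace]) auto
    ultimately have "A u - th i *s u \<in> SP Es {0..Suc i}"
      by (intro subspace_diff[OF SP_subspace])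
    then show ?thesis using False w1 by (simp add: U_def)
  qed
qed

lemma U_As:
  assumes i: "i \<le> d" and u: "u \<in> U i"
  shows "As u - ths i *s u \<in> (if i = 0 then {0} else U (i - 1))"
proof -
  interpret sw: tds scale Basis d As Es ths A E th by (rule swap)
  have w1: "As u - ths i *s u \<in> SP Es {0..<i}"
    using sw.G3'[OF i] u by (simp add: U_def SP_def sw.SP_def)
  show ?thesis
  proof (cases "i = 0")
    case True
    then show ?thesis using w1 SP_empty[of Es] by simp
  next
    case False
    have "As u \<in> SP E {i - 1..d}" using sw.G2'[OF i] u by (simp add: U_def SP_def sw.SP_def)
    moreover have "ths i *s u \<in> SP E {i - 1..d}"
      using u SP_mono[of "{i..d}" "{i - 1..d}" E] unfolding U_def
      by (intro subspace_scale[OF SP_subspace]) auto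
    ultimately have "As u - ths i *s u \<in> SP E {i - 1..d}"
      by (intro subspace_diff[OF SP_subspace])
    moreover have "{0..<i} = {0..i - 1}" using False by auto
    ultimately show ?thesis using False w1 by (simp add: U_def)
  qed
qed

lemma Sigma_UNIV: "span (\<Union>i\<in>{0..d}. U i) = UNIV"
proof -
  let ?S = "span (\<Union>i\<in>{0..d}. U i)"
  have inS: "u \<in> U i \<Longrightarrow> i \<le> d \<Longrightarrow> u \<in> ?S" for u i by (intro span_base) auto
  have AS: "A ` ?S \<subseteq> ?S"
  proof
    fix y assume "y \<in> A ` ?S"
    then obtain x where x: "x \<in> ?S" "y = A x" by auto
    have "A x \<in> ?S"
    proof (rule lin_span_sub[OF linA _ subspace_span x(1)])
      fix u assume "u \<in> (\<Union>i\<in>{0..d}. U i)"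
      then obtain i where i: "i \<le> d" "u \<in> U i" by auto
      have "A u - th i *s u \<in> ?S"
        using U_A[OF i] inS[of _ "Suc i"] i span_zero by (cases "i = d") auto
      moreover have "th i *s u \<in> ?S" using inS[OF i(2) i(1)] by (rule span_scale)
      ultimately have "(A u - th i *s u) + th i *s u \<in> ?S" by (rule span_add)
      then show "A u \<in> ?S" by simp
    qed
    then show "y \<in> ?S" using x by simp
  qed
  have AsS: "As ` ?S \<subseteq> ?S"
  proof
    fix y assume "y \<in> As ` ?S"
    then obtain x where x: "x \<in> ?S" "y = As x" by auto
    have "As x \<in> ?S"
    proof (rule lin_span_sub[OF linAs _ subspace_span x(1)])
      fix u assume "u \<in> (\<Union>i\<in>{0..d}. U i)"
      then obtain i where i: "i \<le> d" "u \<in> U i" by auto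
      have "As u - ths i *s u \<in> ?S"
        using U_As[OF i] inS[of _ "i - 1"] i span_zero by (cases "i = 0") auto
      moreover have "ths i *s u \<in> ?S" using inS[OF i(2) i(1)] by (rule span_scale)
      ultimately have "(As u - ths i *s u) + ths i *s u \<in> ?S" by (rule span_add)
      then show "As u \<in> ?S" by simp
    qed
    then show "y \<in> ?S" using x by simp
  qed
  have "?S \<noteq> {0}"
  proof -
    have "ths 0 \<in> eigenvalues_of scale As" using evAs by auto
    then obtain v where v: "v \<noteq> 0" "As v = ths 0 *s v" by (auto simp: eigenvalues_of_def)
    interpret sw: tds scale Basis d As Es ths A E th by (rule swap)
    have "v \<in> range (Es 0)" using sw.range_E[of 0] v by (simp add: eigenspace_of_def)
    then have "v \<in> SP Es {0..0}" unfolding SP_def by (intro span_base) auto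
    then have "v \<in> U 0" using SP_full by (simp add: U_def)
    then have "v \<in> ?S" using inS by simp
    then show ?thesis using v by auto
  qed
  then show ?thesis using irr[OF subspace_span AS AsS] by simp
qed


lemma sum_split: "i \<le> d \<Longrightarrow> sum f {0..d} = sum f {0..i} + sum f {Suc i..d}" for f :: "nat \<Rightarrow> nat"
proof -
  assume i: "i \<le> d"
  have "{0..d} = {0..i} \<union> {Suc i..d}" using i by auto
  then show ?thesis by (simp add: sum.union_disjoint)
qed

lemma SP_eig: "I \<subseteq> {0..d} \<Longrightarrow> SP E I = span (\<Union>h\<in>I. eigenspace_of scale A (th h))"
proof -
  assume I: "I \<subseteq> {0..d}"
  have "range (E h) = eigenspace_of scale A (th h)" if "h \<in> I" for h
  proof -
    have "h \<le> d" using that I by auto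
    then show ?thesis by (rule range_E)
  qed
  then show ?thesis unfolding SP_def by (intro arg_cong[where f=span] SUP_cong refl) auto
qed

lemma dim_SP: "I \<subseteq> {0..d} \<Longrightarrow> dim (SP E I) = (\<Sum>h\<in>I. dim (eigenspace_of scale A (th h)))"
  using SP_eig eig_dim[OF linA _ inj_on_subset[OF injth]] finite_subset[of _ "{0..d}"] by simp

lemma dim_UNIV_sum: "dim (UNIV :: 'v set) = (\<Sum>h\<in>{0..d}. dim (eigenspace_of scale A (th h)))"
  using dim_SP[of "{0..d}"] SP_full by simp

lemma dim_plus_le:
  assumes "subspace S" "subspace T"
  shows "dim (span (S \<union> T)) \<le> dim S + dim T"
proof -
  have "span S = S" "span T = T" using assms by (auto intro: span_eq_iff[THEN iffD2])
  then have "span (S \<union> T) = {x + y |x y. x \<in> S \<and> y \<in> T}" using span_Un[of S T] by (simp del: span_eq_iff)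
  then show ?thesis using dim_sums_Int[OF assms] by simp
qed

lemma rho_le:
  assumes i: "i \<le> d"
  shows "(\<Sum>h\<in>{0..i}. dim (eigenspace_of scale A (th h))) \<le> (\<Sum>h\<in>{0..i}. dim (eigenspace_of scale As (ths h)))"
proof -
  interpret sw: tds scale Basis d As Es ths A E th by (rule swap)
  let ?S = "SP Es {0..i}" and ?T = "SP E {Suc i..d}"
  have "(\<Union>j\<in>{0..d}. U j) \<subseteq> ?S \<union> ?T"
  proof
    fix x assume "x \<in> (\<Union>j\<in>{0..d}. U j)"
    then obtain j where j: "j \<le> d" "x \<in> U j" by auto
    show "x \<in> ?S \<union> ?T"
    proof (cases "j \<le> i")
      case True
      then have "SP Es {0..j} \<subseteq> ?S" by (intro SP_mono) auto
      then show ?thesis using j by (auto simp: U_def)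
    next
      case False
      then have "SP E {j..d} \<subseteq> ?T" by (intro SP_mono) auto
      then show ?thesis using j by (auto simp: U_def)
    qed
  qed
  then have "span (\<Union>j\<in>{0..d}. U j) \<subseteq> span (?S \<union> ?T)" by (rule span_mono)
  then have "UNIV \<subseteq> span (?S \<union> ?T)" using Sigma_UNIV by simp
  then have "dim (UNIV :: 'v set) \<le> dim (span (?S \<union> ?T))" by (rule dim_subset)
  also have "\<dots> \<le> dim ?S + dim ?T" by (rule dim_plus_le[OF SP_subspace SP_subspace])
  also have "dim ?S = (\<Sum>h\<in>{0..i}. dim (eigenspace_of scale As (ths h)))"
    using sw.dim_SP[of "{0..i}"] i by (simp add: SP_def sw.SP_def)
  also have "dim ?T = (\<Sum>h\<in>{Suc i..d}. dim (eigenspace_of scale A (th h)))"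
    using dim_SP[of "{Suc i..d}"] by simp
  finally show ?thesis using dim_UNIV_sum sum_split[OF i] by simp
qed

lemma rho_eq:
  assumes i: "i \<le> d"
  shows "(\<Sum>h\<in>{0..i}. dim (eigenspace_of scale A (th h))) = (\<Sum>h\<in>{0..i}. dim (eigenspace_of scale As (ths h)))"
proof -
  interpret sw: tds scale Basis d As Es ths A E th by (rule swap)
  show ?thesis using rho_le[OF i] sw.rho_le[OF i] by simp
qed


lemma U_subspace: "subspace (U i)" unfolding U_def by (intro subspace_inter SP_subspace)

context
  fixes K :: "'v \<Rightarrow> 'v"
  assumes Klin: "Vector_Spaces.linear scale scale K"
    and Kact: "\<forall>i\<le>d. \<forall>v\<in>U i. K v = ths i *s v"
begin

lemma K_U: "i \<le> d \<Longrightarrow> eigenspace_of scale K (ths i) = U i"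
proof
  assume i: "i \<le> d"
  show "U i \<subseteq> eigenspace_of scale K (ths i)" using Kact i by (auto simp: eigenspace_of_def)
  show "eigenspace_of scale K (ths i) \<subseteq> U i"
  proof
    fix x assume x: "x \<in> eigenspace_of scale K (ths i)"
    have "(\<Union>j\<in>{0..d}. U j) = U i \<union> (\<Union>j\<in>{0..d}-{i}. U j)" using i by auto
    then have "x \<in> span (U i \<union> (\<Union>j\<in>{0..d}-{i}. U j))" using Sigma_UNIV by simp
    then obtain y z where yz: "x = y + z" "y \<in> span (U i)" "z \<in> span (\<Union>j\<in>{0..d}-{i}. U j)"
      unfolding span_Un by blast
    have sU: "span (U i) = U i" using U_subspace by (rule span_eq_iff[THEN iffD2])
    have y: "y \<in> U i" using yz(2) sU by blast
    have "(\<Union>j\<in>{0..d}-{i}. U j) \<subseteq> (\<Union>j\<in>{0..d}-{i}. eigenspace_of scale K (ths j))"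
      using Kact by (auto simp: eigenspace_of_def)
    then have z: "z \<in> span (\<Union>j\<in>{0..d}-{i}. eigenspace_of scale K (ths j))"
      using yz(3) span_mono by blast
    have "y \<in> eigenspace_of scale K (ths i)" using y Kact i by (auto simp: eigenspace_of_def)
    then have "x - y \<in> eigenspace_of scale K (ths i)"
      using x by (intro subspace_diff[OF eig_subspace[OF Klin]])
    then have Kz: "K z = ths i *s z" using yz(1) by (simp add: eigenspace_of_def)
    have "ths i \<notin> ths ` ({0..d} - {i})" using injths i by (auto dest: inj_onD)
    then have "z = 0" using eig_indep[OF Klin _ z Kz] by simp
    then show "x \<in> U i" using yz(1) y by simp
  qed
qed

lemma UN_U_eig: "J \<subseteq> {0..d} \<Longrightarrow> (\<Union>j\<in>J. U j) = (\<Union>j\<in>J. eigenspace_of scale K (ths j))"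
proof -
  assume J: "J \<subseteq> {0..d}"
  have "U j = eigenspace_of scale K (ths j)" if "j \<in> J" for j
  proof -
    have "j \<le> d" using that J by auto
    then show ?thesis by (rule K_U[symmetric])
  qed
  then show ?thesis by (intro SUP_cong refl) auto
qed

lemma K_span: "span (\<Union>i\<in>{0..d}. eigenspace_of scale K (ths i)) = UNIV"
  using UN_U_eig[of "{0..d}"] Sigma_UNIV by simp

lemma dimU_sum: "J \<subseteq> {0..d} \<Longrightarrow> dim (span (\<Union>j\<in>J. U j)) = (\<Sum>j\<in>J. dim (U j))"
proof -
  assume J: "J \<subseteq> {0..d}"
  have "dim (span (\<Union>j\<in>J. U j)) = (\<Sum>j\<in>J. dim (eigenspace_of scale K (ths j)))"
    using UN_U_eig[OF J] eig_dim[OF Klin finite_subset[OF J] inj_on_subset[OF injths J]] by simp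
  also have "\<dots> = (\<Sum>j\<in>J. dim (U j))" using J K_U by (intro sum.cong refl) auto
  finally show ?thesis .
qed

lemma dim_U: "i \<le> d \<Longrightarrow> dim (U i) = dim (eigenspace_of scale As (ths i))"
proof -
  interpret sw: tds scale Basis d As Es ths A E th by (rule swap)
  let ?u = "\<lambda>j. dim (U j)" and ?r = "\<lambda>j. dim (eigenspace_of scale A (th j))"
    and ?rs = "\<lambda>j. dim (eigenspace_of scale As (ths j))"
  have tot: "sum ?u {0..d} = sum ?r {0..d}"
    using dimU_sum[of "{0..d}"] Sigma_UNIV dim_UNIV_sum by simp
  have eq: "sum ?u {0..i} = sum ?rs {0..i}" if i: "i \<le> d" for i
  proof -
    have "span (\<Union>j\<in>{0..i}. U j) \<subseteq> SP Es {0..i}"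
    proof (rule span_minimal[OF _ SP_subspace])
      show "(\<Union>j\<in>{0..i}. U j) \<subseteq> SP Es {0..i}"
      proof
        fix x assume "x \<in> (\<Union>j\<in>{0..i}. U j)"
        then obtain j where j: "j \<le> i" "x \<in> U j" by auto
        have "SP Es {0..j} \<subseteq> SP Es {0..i}" using j by (intro SP_mono) auto
        then show "x \<in> SP Es {0..i}" using j by (auto simp: U_def)
      qed
    qed
    then have "dim (span (\<Union>j\<in>{0..i}. U j)) \<le> dim (SP Es {0..i})" by (rule dim_subset)
    moreover have "dim (SP Es {0..i}) = sum ?rs {0..i}"
      using sw.dim_SP[of "{0..i}"] i by (simp add: SP_def sw.SP_def)
    moreover have "dim (span (\<Union>j\<in>{0..i}. U j)) = sum ?u {0..i}" using i by (intro dimU_sum) auto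
    ultimately have a: "sum ?u {0..i} \<le> sum ?rs {0..i}" by simp
    have "span (\<Union>j\<in>{Suc i..d}. U j) \<subseteq> SP E {Suc i..d}"
    proof (rule span_minimal[OF _ SP_subspace])
      show "(\<Union>j\<in>{Suc i..d}. U j) \<subseteq> SP E {Suc i..d}"
      proof
        fix x assume "x \<in> (\<Union>j\<in>{Suc i..d}. U j)"
        then obtain j where j: "Suc i \<le> j" "j \<le> d" "x \<in> U j" by auto
        have "SP E {j..d} \<subseteq> SP E {Suc i..d}" using j by (intro SP_mono) auto
        then show "x \<in> SP E {Suc i..d}" using j by (auto simp: U_def)
      qed
    qed
    then have "dim (span (\<Union>j\<in>{Suc i..d}. U j)) \<le> dim (SP E {Suc i..d})" by (rule dim_subset)
    moreover have "dim (SP E {Suc i..d}) = sum ?r {Suc i..d}" using dim_SP[of "{Suc i..d}"] by simp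
    moreover have "dim (span (\<Union>j\<in>{Suc i..d}. U j)) = sum ?u {Suc i..d}" by (intro dimU_sum) auto
    ultimately have b: "sum ?u {Suc i..d} \<le> sum ?r {Suc i..d}" by simp
    have "sum ?u {0..i} + sum ?u {Suc i..d} = sum ?r {0..i} + sum ?r {Suc i..d}"
      using tot sum_split[OF i, of ?u] sum_split[OF i, of ?r] by simp
    then show ?thesis using a b rho_eq[OF i] by simp
  qed
  assume i: "i \<le> d"
  show "dim (U i) = ?rs i"
  proof (cases i)
    case 0
    then show ?thesis using eq[of 0] by simp
  next
    case (Suc k)
    then show ?thesis using eq[of k] eq[of "Suc k"] i by simp
  qed
qed


definition P :: "nat \<Rightarrow> 'v \<Rightarrow> 'v" where "P i = prim_idem scale K ths d i"
definition Dg :: "(nat \<Rightarrow> 'a) \<Rightarrow> 'v \<Rightarrow> 'v" where "Dg g v = (\<Sum>i\<in>{0..d}. g i *s P i v)"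

lemma P_lin: "Vector_Spaces.linear scale scale (P i)"
  unfolding P_def by (rule prim_idem_linear[OF Klin])

lemma P_on: "j \<le> d \<Longrightarrow> u \<in> U j \<Longrightarrow> i \<le> d \<Longrightarrow> P i u = (if i = j then u else 0)"
proof -
  assume j: "j \<le> d" "u \<in> U j" "i \<le> d"
  then have "K u = ths j *s u" using Kact by blast
  then show ?thesis unfolding P_def using prim_idem_delta[OF Klin injths j(3) j(1)] by simp
qed

lemma Dg_lin: "Vector_Spaces.linear scale scale (Dg g)"
proof -
  have ad: "Dg g (x + y) = Dg g x + Dg g y" for x y
  proof -
    have "P i (x + y) = P i x + P i y" for i using P_lin[of i] by (simp add: Vector_Spaces.linear_iff)
    then show ?thesis unfolding Dg_def by (simp add: scale_right_distrib sum.distrib)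
  qed
  have sc: "Dg g (c *s x) = c *s Dg g x" for c x
  proof -
    have "P i (c *s x) = c *s P i x" for i using P_lin[of i] by (simp add: Vector_Spaces.linear_iff)
    then show ?thesis unfolding Dg_def by (simp add: scale_sum_right mult.commute)
  qed
  show ?thesis unfolding Vector_Spaces.linear_iff using vector_space_axioms ad sc by blast
qed

lemma Dg_on: "j \<le> d \<Longrightarrow> u \<in> U j \<Longrightarrow> Dg g u = g j *s u"
proof -
  assume j: "j \<le> d" "u \<in> U j"
  have "Dg g u = (\<Sum>i\<in>{0..d}. if i = j then g j *s u else 0)"
    unfolding Dg_def using P_on[OF j] by (intro sum.cong refl) auto
  then show ?thesis using j by simp
qed

lemma Dg_comp: "Dg g (Dg h v) = Dg (\<lambda>i. g i * h i) v"
proof -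
  have v: "v \<in> span (\<Union>j\<in>{0..d}. U j)" using Sigma_UNIV by simp
  have "(Dg g \<circ> Dg h) v = Dg (\<lambda>i. g i * h i) v"
  proof (rule lin_eq_on[OF Vector_Spaces.linear_compose[OF Dg_lin Dg_lin] Dg_lin v])
    fix b assume "b \<in> (\<Union>j\<in>{0..d}. U j)"
    then obtain j where j: "j \<le> d" "b \<in> U j" by auto
    have "h j *s b \<in> U j" using j U_subspace by (simp add: subspace_scale)
    then show "(Dg g \<circ> Dg h) b = Dg (\<lambda>i. g i * h i) b"
      using Dg_on[OF j] Dg_on[OF j(1)] by (simp add: mult.commute)
  qed
  then show ?thesis by simp
qed

lemma Dg_one: "Dg (\<lambda>i. 1) v = v"
proof -
  have v: "v \<in> span (\<Union>j\<in>{0..d}. U j)" using Sigma_UNIV by simp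
  show ?thesis
  proof (rule lin_eq_on[OF Dg_lin linear_ident v])
    fix b assume "b \<in> (\<Union>j\<in>{0..d}. U j)"
    then obtain j where j: "j \<le> d" "b \<in> U j" by auto
    then show "Dg (\<lambda>i. 1) b = b" using Dg_on[OF j] by simp
  qed
qed


lemma U_nz: "i \<le> d \<Longrightarrow> \<exists>v. v \<noteq> 0 \<and> v \<in> U i"
proof -
  assume i: "i \<le> d"
  have "ths i \<in> eigenvalues_of scale As" using evAs i by auto
  then obtain v where v: "v \<noteq> 0" "As v = ths i *s v" by (auto simp: eigenvalues_of_def)
  then have "\<not> eigenspace_of scale As (ths i) \<subseteq> {0}" by (auto simp: eigenspace_of_def)
  then have "dim (eigenspace_of scale As (ths i)) \<noteq> 0" by simp
  then have "dim (U i) \<noteq> 0" using dim_U[OF i] by simp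
  then show ?thesis by auto
qed

lemma linB: "Vector_Spaces.linear scale scale (\<lambda>v. t *s As v + (1 - t) *s K v)"
proof -
  interpret a: Vector_Spaces.linear scale scale As by (rule linAs)
  interpret k: Vector_Spaces.linear scale scale K by (rule Klin)
  have ad: "t *s As (x + y) + (1 - t) *s K (x + y) = (t *s As x + (1 - t) *s K x) + (t *s As y + (1 - t) *s K y)" for x y
    by (simp add: a.add k.add scale_right_distrib algebra_simps)
  have sc: "t *s As (c *s x) + (1 - t) *s K (c *s x) = c *s (t *s As x + (1 - t) *s K x)" for c x
    by (simp add: a.scale k.scale scale_right_distrib mult.commute)
  show ?thesis unfolding Vector_Spaces.linear_iff using vector_space_axioms ad sc by blast
qed

lemma final_K:
  shows "diagonalizable_op scale K \<and> eigenvalues_of scale K = ths ` {0..d}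
     \<and> (\<forall>i\<le>d. dim (eigenspace_of scale K (ths i)) = dim (U i))"
proof (intro conjI allI impI)
  have "(\<Union>i\<in>{0..d}. eigenspace_of scale K (ths i)) \<subseteq> {v. \<exists>c. K v = c *s v}"
    by (auto simp: eigenspace_of_def)
  then have "span (\<Union>i\<in>{0..d}. eigenspace_of scale K (ths i)) \<subseteq> span {v. \<exists>c. K v = c *s v}"
    by (rule span_mono)
  then show "diagonalizable_op scale K" using K_span Klin unfolding diagonalizable_op_def by auto
  show "eigenvalues_of scale K = ths ` {0..d}"
  proof
    show "eigenvalues_of scale K \<subseteq> ths ` {0..d}"
    proof
      fix c assume "c \<in> eigenvalues_of scale K"
      then obtain v where v: "v \<noteq> 0" "K v = c *s v" by (auto simp: eigenvalues_of_def)
      have "v \<in> span (\<Union>i\<in>{0..d}. eigenspace_of scale K (ths i))" using K_span by simp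
      then show "c \<in> ths ` {0..d}" using eig_indep[OF Klin _ _ v(2)] v(1) by auto
    qed
    show "ths ` {0..d} \<subseteq> eigenvalues_of scale K"
    proof
      fix c assume "c \<in> ths ` {0..d}"
      then obtain i where i: "i \<le> d" "c = ths i" by auto
      obtain v where "v \<noteq> 0" "v \<in> U i" using U_nz[OF i(1)] by auto
      then show "c \<in> eigenvalues_of scale K" using Kact i unfolding eigenvalues_of_def by auto
    qed
  qed
  fix i :: nat assume "i \<le> d"
  then show "dim (eigenspace_of scale K (ths i)) = dim (U i)" using K_U by simp
qed

lemma final_t:
  assumes t: "t \<noteq> 0"
  defines "B \<equiv> (\<lambda>v. t *s As v + (1 - t) *s K v)"
  shows "diagonalizable_op scale B \<and> eigenvalues_of scale B = ths ` {0..d}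
     \<and> (\<forall>i\<le>d. dim (eigenspace_of scale B (ths i)) = dim (U i))"
proof -
  define D where "D = Dg (\<lambda>i. inverse t ^ i)"
  define D' where "D' = Dg (\<lambda>i. t ^ i)"
  have linD: "Vector_Spaces.linear scale scale D" unfolding D_def by (rule Dg_lin)
  have linD': "Vector_Spaces.linear scale scale D'" unfolding D'_def by (rule Dg_lin)
  have linBB: "Vector_Spaces.linear scale scale B" unfolding B_def by (rule linB)
  interpret dD: Vector_Spaces.linear scale scale D by (rule linD)
  interpret dB: Vector_Spaces.linear scale scale B by (rule linBB)
  have DD': "D (D' v) = v" for v
    unfolding D_def D'_def Dg_comp using t by (simp add: power_mult_distrib[symmetric] Dg_one)
  have D'D: "D' (D v) = v" for v
    unfolding D_def D'_def Dg_comp using t by (simp add: power_mult_distrib[symmetric] Dg_one)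
  have BD: "B (D v) = D (As v)" for v
  proof -
    have v: "v \<in> span (\<Union>j\<in>{0..d}. U j)" using Sigma_UNIV by simp
    have "(B \<circ> D) v = (D \<circ> As) v"
    proof (rule lin_eq_on[OF Vector_Spaces.linear_compose[OF linD linBB]
          Vector_Spaces.linear_compose[OF linAs linD] v])
      fix u assume "u \<in> (\<Union>j\<in>{0..d}. U j)"
      then obtain j where j: "j \<le> d" "u \<in> U j" by auto
      define w where "w = As u - ths j *s u"
      define g where "g = inverse t ^ j"
      have Asu: "As u = ths j *s u + w" unfolding w_def by simp
      have Ku: "K u = ths j *s u" using Kact j by blast
      have Bu: "B u = ths j *s u + t *s w"
      proof -
        have "B u = t *s (ths j *s u) + (1 - t) *s (ths j *s u) + t *s w"
          unfolding B_def Asu Ku by (simp add: scale_right_distrib algebra_simps)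
        also have "t *s (ths j *s u) + (1 - t) *s (ths j *s u) = ths j *s u"
        proof -
          have e: "t * ths j + (1 - t) * ths j = ths j" by (simp add: algebra_simps)
          show ?thesis by (simp add: scale_left_distrib[symmetric] e)
        qed
        finally show ?thesis .
      qed
      have Du: "D u = g *s u" unfolding D_def g_def using Dg_on[OF j] by simp
      have Dsu: "D (ths j *s u) = (ths j * g) *s u" using Du by (simp add: dD.scale)
      have "(B \<circ> D) u = g *s (ths j *s u + t *s w)" using Du Bu by (simp add: dB.scale)
      also have "\<dots> = (ths j * g) *s u + (g * t) *s w" by (simp add: scale_right_distrib mult.commute)
      finally have lhs: "(B \<circ> D) u = (ths j * g) *s u + (g * t) *s w" .
      have rhs: "(D \<circ> As) u = (ths j * g) *s u + D w" using Asu Dsu by (simp add: dD.add)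
      show "(B \<circ> D) u = (D \<circ> As) u"
      proof (cases j)
        case 0
        then have "w = 0" using U_As[OF j] unfolding w_def by simp
        then show ?thesis using lhs rhs by (simp add: dD.zero)
      next
        case (Suc k)
        then have "w \<in> U k" using U_As[OF j] unfolding w_def by simp
        then have "D w = inverse t ^ k *s w" unfolding D_def using Dg_on[of k w] Suc j by simp
        moreover have "g * t = inverse t ^ k" unfolding g_def Suc using t by (simp add: field_simps)
        ultimately show ?thesis using lhs rhs by simp
      qed
    qed
    then show ?thesis by simp
  qed
  have eigB: "eigenspace_of scale B c = D ` eigenspace_of scale As c" for c
  proof
    show "D ` eigenspace_of scale As c \<subseteq> eigenspace_of scale B c"
      using BD by (auto simp: eigenspace_of_def dD.scale)
    show "eigenspace_of scale B c \<subseteq> D ` eigenspace_of scale As c"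
    proof
      fix y assume y: "y \<in> eigenspace_of scale B c"
      define x where "x = D' y"
      have Dx: "D x = y" unfolding x_def by (rule DD')
      have "D (As x) = D (c *s x)" using BD[of x] Dx y by (simp add: eigenspace_of_def dD.scale)
      then have "D' (D (As x)) = D' (D (c *s x))" by simp
      then have "As x = c *s x" using D'D by simp
      then show "y \<in> D ` eigenspace_of scale As c" using Dx by (auto simp: eigenspace_of_def)
    qed
  qed
  have inj_D: "inj D" by (rule inj_on_inverseI[of _ D']) (rule D'D)
  show ?thesis
  proof (intro conjI allI impI)
    have "D ` {v. \<exists>c. As v = c *s v} \<subseteq> {v. \<exists>c. B v = c *s v}"
      using BD by (auto simp: dD.scale)
    then have "span (D ` {v. \<exists>c. As v = c *s v}) \<subseteq> span {v. \<exists>c. B v = c *s v}" by (rule span_mono)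
    moreover have "span (D ` {v. \<exists>c. As v = c *s v}) = D ` span {v. \<exists>c. As v = c *s v}"
      by (rule dD.span_image)
    moreover have "span {v. \<exists>c. As v = c *s v} = UNIV" using diagAs by (simp add: diagonalizable_op_def)
    moreover have "D ` UNIV = UNIV"
    proof -
      have "x \<in> range D" for x
      proof -
        have "x = D (D' x)" by (simp add: DD')
        then show ?thesis by blast
      qed
      then show ?thesis by blast
    qed
    ultimately show "diagonalizable_op scale B" using linBB unfolding diagonalizable_op_def by auto
    have "c \<in> eigenvalues_of scale B \<longleftrightarrow> c \<in> eigenvalues_of scale As" for c
    proof -
      have "c \<in> eigenvalues_of scale B \<longleftrightarrow> (\<exists>v. v \<noteq> 0 \<and> v \<in> eigenspace_of scale B c)"
        by (auto simp: eigenvalues_of_def eigenspace_of_def)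
      also have "\<dots> \<longleftrightarrow> (\<exists>v. v \<noteq> 0 \<and> v \<in> eigenspace_of scale As c)"
        unfolding eigB
      proof
        assume "\<exists>v. v \<noteq> 0 \<and> v \<in> D ` eigenspace_of scale As c"
        then obtain x where x: "D x \<noteq> 0" "x \<in> eigenspace_of scale As c" by auto
        then have "x \<noteq> 0" using dD.zero by auto
        then show "\<exists>v. v \<noteq> 0 \<and> v \<in> eigenspace_of scale As c" using x by blast
      next
        assume "\<exists>v. v \<noteq> 0 \<and> v \<in> eigenspace_of scale As c"
        then obtain x where x: "x \<noteq> 0" "x \<in> eigenspace_of scale As c" by auto
        have "D x \<noteq> 0"
        proof
          assume "D x = 0"
          then have "D x = D 0" using dD.zero by simp
          then have "x = 0" using inj_D unfolding inj_def by blast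
          with x(1) show False by simp
        qed
        then show "\<exists>v. v \<noteq> 0 \<and> v \<in> D ` eigenspace_of scale As c" using x by blast
      qed
      also have "\<dots> \<longleftrightarrow> c \<in> eigenvalues_of scale As"
        by (auto simp: eigenvalues_of_def eigenspace_of_def)
      finally show ?thesis .
    qed
    then show "eigenvalues_of scale B = ths ` {0..d}" using evAs by auto
    fix i :: nat assume i: "i \<le> d"
    interpret fp: finite_dimensional_vector_space_pair_1 scale Basis scale
      by unfold_locales
    have "dim (D ` eigenspace_of scale As (ths i)) = dim (eigenspace_of scale As (ths i))"
      using fp.dim_image_eq[OF linD] inj_D by (simp add: inj_on_subset)
    then show "dim (eigenspace_of scale B (ths i)) = dim (U i)" using eigB dim_U[OF i] by simp
  qed
qed

end

end


theorem lemma7p6: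
  fixes s :: "'a::alg_closed_field \<Rightarrow> 'v::ab_group_add \<Rightarrow> 'v"
    and Basis :: "'v set"
    and q t :: 'a and d :: nat
    and A As K :: "'v \<Rightarrow> 'v" and E Es :: "nat \<Rightarrow> 'v \<Rightarrow> 'v"
  assumes fdvs: "finite_dimensional_vector_space s Basis"
    and V_nonzero: "(UNIV :: 'v set) \<noteq> {0}"
    and q_nz: "q \<noteq> 0"
    and q_not_root: "\<forall>n::nat. n > 0 \<longrightarrow> q ^ n \<noteq> 1"
    and d_ge: "d \<ge> 1"
    and TDS: "tridiagonal_system s d A E (\<lambda>i. q powi (2 * int i - int d))
                                    As Es (\<lambda>i. q powi (int d - 2 * int i))"
    and serre: "q_serre s q A As"
    and K_lin: "Vector_Spaces.linear s s K"
    and K_act: "\<forall>i\<le>d. \<forall>v\<in>split_component s d E Es i. K v = s (q powi (int d - 2 * int i)) v"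
  shows "diagonalizable_op s (\<lambda>v. s t (As v) + s (1 - t) (K v))
     \<and> eigenvalues_of s (\<lambda>v. s t (As v) + s (1 - t) (K v)) = (\<lambda>i. q powi (int d - 2 * int i)) ` {0..d}
     \<and> (\<forall>i\<le>d. vector_space.dim s (eigenspace_of s (\<lambda>v. s t (As v) + s (1 - t) (K v)) (q powi (int d - 2 * int i)))
               = vector_space.dim s (split_component s d E Es i))"
proof -
  interpret fd: finite_dimensional_vector_space s Basis by (rule fdvs)
  interpret T: tds s Basis d A E "\<lambda>i. q powi (2 * int i - int d)" As Es "\<lambda>i. q powi (int d - 2 * int i)"
    by (intro tds.intro fdvs tds_axioms.intro TDS)
  have Kact': "\<forall>i\<le>d. \<forall>v\<in>T.U i. K v = s (q powi (int d - 2 * int i)) v"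
    using K_act by (simp add: T.U_split)
  show ?thesis
  proof (cases "t = 0")
    case True
    have "(\<lambda>v. s t (As v) + s (1 - t) (K v)) = K" using True by simp
    then show ?thesis using T.final_K[OF K_lin Kact'] by (simp add: T.U_split)
  next
    case False
    show ?thesis using T.final_t[OF K_lin Kact' False] by (simp add: T.U_split)
  qed
qed

end
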